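(* Let $h$ and $k$ be positive integers. If $A$ is a set of $k$ nonnegative integers with $\ell_h(A)=n_h(k)$, then $\operatorname{diam}(A)\le n_h(k)$.
   Context: $[0,n]=\{0,1,\ldots,n\}$. $hA=\{a_1+\cdots+a_h: a_i\in A\}$ (summands not necessarily distinct). For a nonempty finite $A\subseteq\mathbf{N}_0=\{0,1,2,\ldots\}$ with $0\in A$, $\ell_h(A)$ is the largest integer $n\ge0$ with $[0,n]\subseteq hA$ (undefined if $0\notin A$). $n_h(k)=\max\{\ell_h(A): A\subseteq\mathbf{N}_0, |A|=k\}$ (over sets where $\ell_h$ is defined). $\operatorname{diam}(A)=\sup\{|a-a'|: a,a'\in A\}$. *)

theory Defs
  imports Main
begin

definition hsum :: "nat \<Rightarrow> nat set \<Rightarrow> nat set" where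
  "hsum h A = {m. \<exists>a. (\<forall>i<h. a i \<in> A) \<and> m = (\<Sum>i<h. a i)}"

(* \<ell>_h(A): largest n \<ge> 0 with [0,n] \<subseteq> hA (meaningful for finite nonempty A with 0 \<in> A) *)
definition ell :: "nat \<Rightarrow> nat set \<Rightarrow> nat" where
  "ell h A = Max {n. {0..n} \<subseteq> hsum h A}"

definition nh :: "nat \<Rightarrow> nat \<Rightarrow> nat" where
  "nh h k = Max {ell h A | A. finite A \<and> card A = k \<and> 0 \<in> A}"

definition diam :: "nat set \<Rightarrow> nat" where
  "diam A = Max A - Min A"

end

theory Submission
  imports Defs "HOL-Library.FuncSet"
begin

lemma hsum_sub: "hsum h A \<subseteq> (\<lambda>a. \<Sum>i<h. a i) ` PiE {..<h} (\<lambda>_. A)"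
proof
  fix m assume "m \<in> hsum h A"
  then obtain a where a: "\<forall>i<h. a i \<in> A" "m = (\<Sum>i<h. a i)" unfolding hsum_def by auto
  have "restrict a {..<h} \<in> PiE {..<h} (\<lambda>_. A)" using a by auto
  moreover have "m = (\<Sum>i<h. restrict a {..<h} i)" using a by simp
  ultimately show "m \<in> (\<lambda>a. \<Sum>i<h. a i) ` PiE {..<h} (\<lambda>_. A)" by blast
qed

lemma hsum_fin: assumes "finite A"
  shows "finite (hsum h A) \<and> card (hsum h A) \<le> card A ^ h"
proof -
  have f: "finite (PiE {..<h} (\<lambda>_. A))" using assms by (simp add: finite_PiE)
  have "card ((\<lambda>a. \<Sum>i<h. a i) ` PiE {..<h} (\<lambda>_. A)) \<le> card A ^ h"
    using card_image_le[OF f, of "\<lambda>a. \<Sum>i<h. a i"] by (simp add: card_PiE)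
  thus ?thesis using hsum_sub[of h A] f
    by (meson card_mono dual_order.trans finite_imageI finite_subset)
qed

lemma intv_bound: assumes "finite A" "{0..n} \<subseteq> hsum h A" shows "n < card A ^ h"
proof -
  have "card {0..n} \<le> card (hsum h A)" using hsum_fin[OF assms(1)] assms(2) card_mono by blast
  thus ?thesis using hsum_fin[OF assms(1), of h] by simp
qed

lemma ell_props: assumes "finite A" "0 \<in> A"
  shows "{0..ell h A} \<subseteq> hsum h A" "\<And>n. {0..n} \<subseteq> hsum h A \<Longrightarrow> n \<le> ell h A"
    "ell h A < card A ^ h"
proof -
  let ?S = "{n. {0..n} \<subseteq> hsum h A}"
  have fin: "finite ?S"
    by (rule finite_subset[of _ "{..<card A ^ h}"]) (auto dest: intv_bound[OF assms(1)])
  have "0 \<in> hsum h A" unfolding hsum_def using assms(2)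
    by (auto intro!: exI[of _ "\<lambda>_. 0"])
  hence ne: "0 \<in> ?S" by auto
  have "ell h A \<in> ?S" unfolding ell_def using Max_in[OF fin] ne by blast
  thus "{0..ell h A} \<subseteq> hsum h A" by simp
  thus "ell h A < card A ^ h" using intv_bound[OF assms(1)] by blast
  show "\<And>n. {0..n} \<subseteq> hsum h A \<Longrightarrow> n \<le> ell h A" unfolding ell_def
    using Max_ge[OF fin] by blast
qed

lemma nh_ge: assumes "finite A" "card A = k" "0 \<in> A" shows "ell h A \<le> nh h k"
proof -
  let ?T = "{ell h A | A. finite A \<and> card A = k \<and> 0 \<in> A}"
  have "finite ?T"
    by (rule finite_subset[of _ "{..<k ^ h}"]) (auto dest: ell_props(3))
  thus ?thesis unfolding nh_def using assms by (intro Max_ge) auto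
qed

lemma single_hsum: assumes "h \<ge> 1" "x \<in> A" "0 \<in> A" shows "x \<in> hsum h A"
proof -
  let ?a = "\<lambda>i::nat. if i = 0 then x else 0"
  have "(\<Sum>i<h. ?a i) = x" using assms(1) by (simp add: sum.delta)
  thus ?thesis unfolding hsum_def using assms by (auto intro!: exI[of _ ?a])
qed

theorem mainTheorem7:
  fixes h k :: nat and A :: "nat set"
  assumes "h \<ge> 1" and "k \<ge> 1"
    and "finite A" and "card A = k" and "0 \<in> A"
    and "ell h A = nh h k"
  shows "diam A \<le> nh h k"
proof -
  define n where "n = ell h A"
  define m where "m = Max A"
  have ne: "A \<noteq> {}" using assms(5) by auto
  have mA: "m \<in> A" unfolding m_def using Max_in[OF assms(3) ne] .
  have "m \<le> n"
  proof (rule ccontr)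
    assume "\<not> m \<le> n"
    hence mn: "n < m" by simp
    have "n + 1 \<notin> hsum h A"
    proof
      assume "n + 1 \<in> hsum h A"
      hence "{0..n+1} \<subseteq> hsum h A" using ell_props(1)[OF assms(3,5), of h] unfolding n_def
        by (auto simp: le_Suc_eq)
      thus False using ell_props(2)[OF assms(3,5)] unfolding n_def by fastforce
    qed
    hence n1: "n + 1 \<notin> A" using single_hsum[OF assms(1) _ assms(5)] by blast
    define A' where "A' = insert (n+1) (A - {m})"
    have fA': "finite A'" using assms(3) unfolding A'_def by simp
    have cA': "card A' = k" unfolding A'_def using assms(3,4) mA n1
      by (simp add: card_insert_disjoint) (metis One_nat_def Suc_pred assms(4) card_gt_0_iff ne)
    have z: "0 \<in> A'" unfolding A'_def using assms(5) mn by auto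
    have "{0..n+1} \<subseteq> hsum h A'"
    proof
      fix x assume x: "x \<in> {0..n+1}"
      show "x \<in> hsum h A'"
      proof (cases "x = n + 1")
        case True thus ?thesis using single_hsum[OF assms(1) _ z] unfolding A'_def by auto
      next
        case False
        hence "x \<in> hsum h A" using x ell_props(1)[OF assms(3,5), of h] unfolding n_def by auto
        then obtain a where a: "\<forall>i<h. a i \<in> A" "x = (\<Sum>i<h. a i)" unfolding hsum_def by auto
        have "\<forall>i<h. a i \<in> A'"
        proof (intro allI impI)
          fix i assume i: "i < h"
          have "a i \<le> x" using a(2) i by (simp add: member_le_sum)
          thus "a i \<in> A'" using a(1) i x False mn unfolding A'_def by auto
        qed
        thus ?thesis unfolding hsum_def using a(2) by auto
      qed
    qed
    hence "n + 1 \<le> ell h A'" using ell_props(2)[OF fA' z] by blast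
    also have "\<dots> \<le> nh h k" using nh_ge[OF fA' cA' z] .
    finally show False using assms(6) unfolding n_def by simp
  qed
  thus ?thesis unfolding diam_def m_def n_def using assms(6) by simp
qed

end
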